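(* Let $\{\tau_b\}_{b\in\mathcal{B}}$ with weights $(p_b)_{b\in\mathcal{B}}$ be an affine iterated function system on $\mathbb{R}^d$ with no overlap, and let $\mu$ be its invariant measure. If $\mu$ admits a frame measure, then all the probabilities $p_b$, $b\in\mathcal{B}$, are equal.
   Context: Affine IFS: $R$ a real $d\times d$ expansive matrix (all eigenvalues of modulus $>1$), $\mathcal{B}=\{b_1,\dots,b_N\}\subset\mathbb{R}^d$, probability weights $p_{b}>0$ with $\sum_b p_{b}=1$, maps $\tau_{b}(x)=R^{-1}(x+b)$. The attractor $X$ is the unique nonempty compact set with $X=\bigcup_b\tau_{b}(X)$; the invariant measure $\mu$ is the unique Borel probability measure with $\mu(E)=\sum_b p_{b}\mu(\tau_{b}^{-1}(E))$ for all Borel $E$. No overlap: $\mu(\tau_{b}(X)\cap\tau_{b'}(X))=0$ for all $b\ne b'$. A Borel measure $\nu$ is a frame measure for $\mu$ if there are $A,B>0$ with $A\|f\|_{L^2(\mu)}^2\le \|\widehat{f\,d\mu}\|_{L^2(\nu)}^2\le B\|f\|_{L^2(\mu)}^2$ for all $f\in L^2(\mu)$, where $\widehat{f\,d\mu}(t)=\int f(x)e^{-2\pi i t\cdot x}\,d\mu(x)$. *)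

theory Defs
  imports "HOL-Probability.Probability"
begin

definition complexify :: "real^'d^'d \<Rightarrow> complex^'d^'d" where
  "complexify R = (\<chi> i j. complex_of_real (R $ i $ j))"

definition expansive :: "real^'d^'d \<Rightarrow> bool" where
  "expansive R \<longleftrightarrow>
     (\<forall>c::complex. (\<exists>v::complex^'d. v \<noteq> 0 \<and> complexify R *v v = c *s v) \<longrightarrow> 1 < norm c)"

definition ifs_map :: "real^'d^'d \<Rightarrow> real^'d \<Rightarrow> real^'d \<Rightarrow> real^'d" where
  "ifs_map R b x = matrix_inv R *v (x + b)"

definition fourier_fmu :: "(real^'d) measure \<Rightarrow> (real^'d \<Rightarrow> complex) \<Rightarrow> real^'d \<Rightarrow> complex" where
  "fourier_fmu \<mu> f t = (\<integral>x. f x * cis (- 2 * pi * (t \<bullet> x)) \<partial>\<mu>)"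

definition L2 :: "(real^'d) measure \<Rightarrow> (real^'d \<Rightarrow> complex) set" where
  "L2 \<mu> = {f. f \<in> borel_measurable \<mu> \<and> integrable \<mu> (\<lambda>x. (norm (f x))\<^sup>2)}"

definition L2_norm_sq :: "(real^'d) measure \<Rightarrow> (real^'d \<Rightarrow> complex) \<Rightarrow> real" where
  "L2_norm_sq \<mu> f = (\<integral>x. (norm (f x))\<^sup>2 \<partial>\<mu>)"

definition frame_measure :: "(real^'d) measure \<Rightarrow> (real^'d) measure \<Rightarrow> bool" where
  "frame_measure \<mu> \<nu> \<longleftrightarrow> sets \<nu> = sets borel \<and>
     (\<exists>A B. 0 < A \<and> 0 < B \<and>
       (\<forall>f \<in> L2 \<mu>.
          ennreal (A * L2_norm_sq \<mu> f) \<le> (\<integral>\<^sup>+ t. ennreal ((norm (fourier_fmu \<mu> f t))\<^sup>2) \<partial>\<nu>) \<and>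
          (\<integral>\<^sup>+ t. ennreal ((norm (fourier_fmu \<mu> f t))\<^sup>2) \<partial>\<nu>) \<le> ennreal (B * L2_norm_sq \<mu> f)))"

end

theory Submission
  imports Defs Jordan_Normal_Form.Spectral_Radius
begin
no_notation vec_index (infixl "$" 100)

definition cvec :: "real^'d \<Rightarrow> complex^'d" where
  "cvec x = (\<chi> i. complex_of_real (x $ i))"

lemma complexify_mv: "complexify A *v cvec x = cvec (A *v x)"
  by (simp add: complexify_def cvec_def Finite_Cartesian_Product.vec_eq_iff matrix_vector_mult_def)

lemma complexify_mm: "complexify (A ** B) = complexify A ** complexify B"
  by (simp add: complexify_def Finite_Cartesian_Product.vec_eq_iff matrix_matrix_mult_def)

lemma complexify_one: "complexify (Finite_Cartesian_Product.mat 1) = Finite_Cartesian_Product.mat 1"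
  by (simp add: complexify_def Finite_Cartesian_Product.vec_eq_iff Finite_Cartesian_Product.mat_def if_distrib)

lemma cvec_eq0: "cvec x = 0 \<longleftrightarrow> x = 0"
  by (simp add: cvec_def Finite_Cartesian_Product.vec_eq_iff)

lemma inv_facts:
  fixes R :: "real^'d^'d"
  assumes "expansive R"
  shows "R ** matrix_inv R = Finite_Cartesian_Product.mat 1 \<and> matrix_inv R ** R = Finite_Cartesian_Product.mat 1"
proof -
  have ker: "\<forall>x. R *v x = 0 \<longrightarrow> x = 0"
  proof (intro allI impI, rule ccontr)
    fix x assume Rx: "R *v x = 0" and nz: "x \<noteq> 0"
    have "cvec x \<noteq> 0" using nz cvec_eq0 by blast
    moreover have "complexify R *v cvec x = 0 *s cvec x"
      using Rx complexify_mv[of R x] by (simp add: cvec_def Finite_Cartesian_Product.vec_eq_iff)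
    ultimately show False using assms unfolding expansive_def by force
  qed
  then obtain B where "B ** R = Finite_Cartesian_Product.mat 1"
    using matrix_left_invertible_ker by blast
  then have "\<exists>A'. R ** A' = Finite_Cartesian_Product.mat 1 \<and> A' ** R = Finite_Cartesian_Product.mat 1"
    using matrix_left_right_inverse by blast
  then show ?thesis unfolding matrix_inv_def by (rule someI_ex)
qed

lemma eig_inv_lt1:
  fixes R :: "real^'d^'d"
  assumes "expansive R" and w: "w \<noteq> 0" "complexify (matrix_inv R) *v w = c *s w"
  shows "norm c < 1"
proof -
  have "complexify R *v (complexify (matrix_inv R) *v w) = w"
    using inv_facts[OF assms(1)]
    by (simp add: matrix_vector_mul_assoc complexify_mm[symmetric] complexify_one)
  hence e: "c *s (complexify R *v w) = w" using w(2) by (simp add: vector_scalar_commute)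
  have c0: "c \<noteq> 0" using e w(1) by auto
  have "complexify R *v w = inverse c *s w"
    using e c0 by (metis vector_smult_assoc left_inverse vector_smult_lid)
  hence "1 < norm (inverse c)" using assms(1) w(1) unfolding expansive_def by blast
  thus ?thesis using c0 by (simp add: norm_inverse) (metis inverse_less_1_iff norm_ge_zero 
     inverse_inverse_eq linorder_not_le)
qed

definition Am :: "(nat \<Rightarrow> 'd) \<Rightarrow> complex^'d^'d \<Rightarrow> complex \<Rightarrow> complex Matrix.mat" where
  "Am h C s = Matrix.mat CARD('d) CARD('d) (\<lambda>(i,j). C $ h i $ h j / s)"

definition cv :: "(nat \<Rightarrow> 'd) \<Rightarrow> complex^'d \<Rightarrow> complex Matrix.vec" where
  "cv h x = Matrix.vec CARD('d) (\<lambda>i. x $ h i)"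

lemma Am_carrier[simp]: "Am (h::nat\<Rightarrow>'d::finite) C s \<in> carrier_mat CARD('d) CARD('d)"
  by (simp add: Am_def)

lemma cv_carrier[simp]: "cv (h::nat\<Rightarrow>'d::finite) x \<in> carrier_vec CARD('d)"
  by (simp add: cv_def)

lemma Am_dims[simp]: "dim_row (Am (h::nat\<Rightarrow>'d::finite) C s) = CARD('d)" "dim_col (Am h C s) = CARD('d)"
    "dim_vec (cv h x) = CARD('d)"
  by (auto simp: Am_def cv_def)

lemma Am_mv:
  fixes h :: "nat \<Rightarrow> 'd::finite"
  assumes "dim_vec v = CARD('d)" "i < CARD('d)"
  shows "vec_index (Am h C s *\<^sub>v v) i = (\<Sum>j<CARD('d). C $ h i $ h j / s * vec_index v j)"
  using assms by (simp add: Am_def scalar_prod_def atLeast0LessThan)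

lemma cv_mv:
  fixes C :: "complex^'d^'d" and h :: "nat \<Rightarrow> 'd::finite"
  assumes h: "bij_betw h {0..<CARD('d)} UNIV" and s: "s \<noteq> 0"
  shows "cv h (C *v y) = s \<cdot>\<^sub>v (Am h C s *\<^sub>v cv h y)"
proof (rule eq_vecI)
  show "dim_vec (cv h (C *v y)) = dim_vec (s \<cdot>\<^sub>v (Am h C s *\<^sub>v cv h y))"
    by (simp add: cv_def Am_def)
  fix i assume i: "i < dim_vec (s \<cdot>\<^sub>v (Am h C s *\<^sub>v cv h y))"
  hence i': "i < CARD('d)" by (simp add: Am_def)
  have "vec_index (cv h (C *v y)) i = (\<Sum>j\<in>UNIV. C $ h i $ j * y $ j)"
    using i' by (simp add: cv_def matrix_vector_mult_def)
  also have "\<dots> = (\<Sum>l\<in>{0..<CARD('d)}. C $ h i $ h l * y $ h l)"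
    using sum.reindex_bij_betw[OF h, of "\<lambda>j. C $ h i $ j * y $ j"] by simp
  also have "\<dots> = s * (\<Sum>l<CARD('d). C $ h i $ h l / s * vec_index (cv h y) l)"
    using s by (simp add: sum_distrib_left cv_def atLeast0LessThan)
  also have "\<dots> = vec_index (s \<cdot>\<^sub>v (Am h C s *\<^sub>v cv h y)) i"
    using i' by (simp add: Am_mv cv_def del: index_mult_mat_vec)
  finally show "vec_index (cv h (C *v y)) i = vec_index (s \<cdot>\<^sub>v (Am h C s *\<^sub>v cv h y)) i" .
qed

lemma cv_inj:
  fixes h :: "nat \<Rightarrow> 'd::finite"
  assumes h: "bij_betw h {0..<CARD('d)} UNIV" and e: "cv h a = cv h b"
  shows "a = b"
proof -
  have "a $ i = b $ i" for i
  proof -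
    obtain l where l: "l < CARD('d)" "h l = i" using h unfolding bij_betw_def
      by (metis UNIV_I atLeastLessThan_iff imageE)
    have "vec_index (cv h a) l = vec_index (cv h b) l" using e by simp
    thus ?thesis using l by (simp add: cv_def)
  qed
  thus ?thesis by (simp add: Finite_Cartesian_Product.vec_eq_iff)
qed

lemma cv_pow:
  fixes C :: "complex^'d^'d" and h :: "nat \<Rightarrow> 'd::finite"
  assumes h: "bij_betw h {0..<CARD('d)} UNIV" and s: "s \<noteq> 0"
  shows "cv h (((*v) C ^^ k) y) = s^k \<cdot>\<^sub>v (Am h C s ^\<^sub>m k *\<^sub>v cv h y)"
proof (induction k arbitrary: y)
  case 0
  then show ?case by (simp add: Am_def)
next
  case (Suc k)
  have "cv h (((*v) C ^^ Suc k) y) = cv h (((*v) C ^^ k) (C *v y))"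
    by (simp add: funpow_Suc_right del: funpow.simps)
  also have "\<dots> = s^k \<cdot>\<^sub>v (Am h C s ^\<^sub>m k *\<^sub>v (s \<cdot>\<^sub>v (Am h C s *\<^sub>v cv h y)))"
    using Suc cv_mv[OF h s] by simp
  also have "\<dots> = s^Suc k \<cdot>\<^sub>v ((Am h C s ^\<^sub>m k * Am h C s) *\<^sub>v cv h y)"
  proof -
    have c1: "Am h C s *\<^sub>v cv h y \<in> carrier_vec CARD('d)"
      by (rule mult_mat_vec_carrier[OF Am_carrier cv_carrier])
    have "Am h C s ^\<^sub>m k *\<^sub>v (s \<cdot>\<^sub>v (Am h C s *\<^sub>v cv h y)) =
          s \<cdot>\<^sub>v (Am h C s ^\<^sub>m k *\<^sub>v (Am h C s *\<^sub>v cv h y))"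
      by (rule mult_mat_vec[OF pow_carrier_mat[OF Am_carrier] c1])
    moreover have "Am h C s ^\<^sub>m k *\<^sub>v (Am h C s *\<^sub>v cv h y) = (Am h C s ^\<^sub>m k * Am h C s) *\<^sub>v cv h y"
      by (rule assoc_mult_mat_vec[OF pow_carrier_mat[OF Am_carrier] Am_carrier cv_carrier, symmetric])
    ultimately show ?thesis by (simp add: smult_smult_assoc mult.commute)
  qed
  finally show ?case by simp
qed

lemma eig_scale:
  fixes h :: "nat \<Rightarrow> 'd::finite"
  assumes ev: "eigenvector (Am h C s) v e" and s: "s \<noteq> 0"
  shows "eigenvector (Am h C 1) v (s * e)"
proof -
  have v: "v \<in> carrier_vec CARD('d)" "v \<noteq> 0\<^sub>v CARD('d)" "Am h C s *\<^sub>v v = e \<cdot>\<^sub>v v"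
    using ev unfolding eigenvector_def by (auto simp: Am_def)
  have "Am h C 1 *\<^sub>v v = s \<cdot>\<^sub>v (Am h C s *\<^sub>v v)"
  proof (rule eq_vecI)
    fix i assume "i < dim_vec (s \<cdot>\<^sub>v (Am h C s *\<^sub>v v))"
    hence i: "i < CARD('d)" by (simp add: Am_def)
    show "vec_index (Am h C 1 *\<^sub>v v) i = vec_index (s \<cdot>\<^sub>v (Am h C s *\<^sub>v v)) i"
    proof -
      have "vec_index (Am h C s *\<^sub>v v) i = e * vec_index v i" using v(3) i v(1) by simp
      moreover have "vec_index (Am h C s *\<^sub>v v) i = (\<Sum>j<CARD('d). C $ h i $ h j / s * vec_index v j)"
        using i v(1) by (intro Am_mv) auto
      ultimately have "(\<Sum>j<CARD('d). C $ h i $ h j / s * vec_index v j) = e * vec_index v i"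
        by simp
      moreover have "(\<Sum>j<CARD('d). C $ h i $ h j * vec_index v j) = s * (\<Sum>j<CARD('d). C $ h i $ h j / s * vec_index v j)"
        using s by (simp add: sum_distrib_left)
      ultimately show ?thesis using i v s by (simp add: Am_mv del: index_mult_mat_vec)
    qed
  qed simp
  also have "\<dots> = (s * e) \<cdot>\<^sub>v v" using v by (simp add: smult_smult_assoc)
  finally show ?thesis using v unfolding eigenvector_def by (simp add: Am_def)
qed

lemma eig_to_w:
  fixes C :: "complex^'d^'d" and h :: "nat \<Rightarrow> 'd::finite"
  assumes h: "bij_betw h {0..<CARD('d)} UNIV" and ev: "eigenvector (Am h C 1) v c"
  shows "\<exists>w. w \<noteq> 0 \<and> C *v w = c *s w"
proof -
  have v: "v \<in> carrier_vec CARD('d)" "v \<noteq> 0\<^sub>v CARD('d)" "Am h C 1 *\<^sub>v v = c \<cdot>\<^sub>v v"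
    using ev unfolding eigenvector_def by (auto simp: Am_def)
  define g where "g = inv_into {0..<CARD('d)} h"
  define w :: "complex^'d" where "w = (\<chi> i. vec_index v (g i))"
  have cvw: "cv h w = v"
  proof (rule eq_vecI)
    fix l assume "l < dim_vec v"
    hence l: "l < CARD('d)" using v by simp
    have "g (h l) = l" unfolding g_def using h l by (simp add: bij_betw_def inv_into_f_f)
    thus "vec_index (cv h w) l = vec_index v l" using l by (simp add: cv_def w_def)
  qed (use v in simp)
  have "w \<noteq> 0"
  proof
    assume "w = 0"
    hence "cv h w = 0\<^sub>v CARD('d)" by (simp add: cv_def Matrix.zero_vec_def)
    thus False using cvw v by simp
  qed
  moreover have "cv h (C *v w) = cv h (c *s w)"
  proof -
    have "cv h (C *v w) = 1 \<cdot>\<^sub>v (Am h C 1 *\<^sub>v v)" using cv_mv[OF h, of 1 C w] cvw by simp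
    also have "\<dots> = c \<cdot>\<^sub>v v" using v by simp
    also have "\<dots> = cv h (c *s w)"
      using cvw by (auto simp: cv_def)
    finally show ?thesis .
  qed
  hence "C *v w = c *s w" using cv_inj[OF h] by blast
  ultimately show ?thesis by blast
qed

lemma cvec_pow: "cvec (((*v) M ^^ k) x) = ((*v) (complexify M) ^^ k) (cvec x)"
  by (induction k) (simp_all add: complexify_mv[symmetric])

lemma contraction:
  fixes R :: "real^'d^'d"
  assumes expR: "expansive R" and eps: "\<epsilon> > 0"
  shows "\<exists>k. \<forall>x. norm (((*v) (matrix_inv R) ^^ k) x) \<le> \<epsilon> * norm x"
proof -
  define M where "M = matrix_inv R"
  define C where "C = complexify M"
  obtain h :: "nat \<Rightarrow> 'd" where h: "bij_betw h {0..<CARD('d)} UNIV"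
    using ex_bij_betw_nat_finite[of "UNIV::'d set"] by auto
  let ?n = "CARD('d)"
  have n0: "0 < ?n" by simp
  have eig1: "norm c < 1" if ev1: "eigenvector (Am h C 1) v c" for v c
  proof -
    obtain w where "w \<noteq> 0" "C *v w = c *s w" using eig_to_w[OF h ev1] by blast
    thus ?thesis using eig_inv_lt1[OF expR] unfolding C_def M_def by blast
  qed
  define r where "r = spectral_radius (Am h C 1)"
  have "r \<in> norm ` spectrum (Am h C 1)" unfolding r_def by (rule spectral_radius_mem_max(1)[OF Am_carrier n0])
  then obtain c where c: "eigenvalue (Am h C 1) c" "r = norm c" by (auto simp: spectrum_def)
  hence r1: "r < 1" and r0: "0 \<le> r" using eig1 by (auto simp: eigenvalue_def)
  define s where "s = (1 + r)/2"
  have s: "0 < s" "s < 1" "r < s" using r1 r0 by (auto simp: s_def)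
  let ?A = "Am h C (complex_of_real s)"
  have "spectral_radius ?A < 1"
  proof -
    have "spectral_radius ?A \<in> norm ` spectrum ?A" by (rule spectral_radius_mem_max(1)[OF Am_carrier n0])
    then obtain e where e: "eigenvalue ?A e" "spectral_radius ?A = norm e" by (auto simp: spectrum_def)
    then obtain v where "eigenvector ?A v e" by (auto simp: eigenvalue_def)
    hence "eigenvector (Am h C 1) v (complex_of_real s * e)" by (rule eig_scale) (use s in auto)
    hence "norm (complex_of_real s * e) \<in> norm ` spectrum (Am h C 1)" unfolding spectrum_def eigenvalue_def by blast
    hence "norm (complex_of_real s * e) \<le> r" unfolding r_def by (rule spectral_radius_mem_max(2)[OF Am_carrier n0])
    hence "s * norm e \<le> r" using s by (simp add: norm_mult)
    hence "s * norm e < s * 1" using s by linarith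
    thus ?thesis using e s by simp
  qed
  then obtain c0 where c0: "\<forall>k. norm_bound (?A ^\<^sub>m k) c0"
    using spectral_radius_jnf_norm_bound_less_1_upper_triangular[OF Am_carrier] by blast
  define K where "K = real ?n * real ?n * (abs c0 + 1)"
  have K: "0 < K" unfolding K_def by (simp add: add_pos_nonneg)
  obtain k where k: "s ^ k < \<epsilon> / K" using real_arch_pow_inv[of "\<epsilon>/K" s] eps K s by auto
  show ?thesis
  proof (intro exI allI)
    fix x
    define y where "y = ((*v) M ^^ k) x"
    have cy: "cvec y = ((*v) C ^^ k) (cvec x)" unfolding y_def C_def by (rule cvec_pow)
    have cv_eq: "cv h (cvec y) = (complex_of_real s)^k \<cdot>\<^sub>v (?A ^\<^sub>m k *\<^sub>v cv h (cvec x))"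
      unfolding cy by (rule cv_pow[OF h]) (use s in auto)
    have Ak: "?A ^\<^sub>m k \<in> carrier_mat ?n ?n" by simp
    have comp: "norm (vec_index (?A ^\<^sub>m k *\<^sub>v cv h (cvec x)) l) \<le> real ?n * (abs c0 * norm x)"
      if l: "l < ?n" for l
    proof -
      have "vec_index (?A ^\<^sub>m k *\<^sub>v cv h (cvec x)) l =
            (\<Sum>j\<in>{0..<?n}. (?A ^\<^sub>m k) $$ (l,j) * complex_of_real (x $ h j))"
        using l Ak by (simp add: scalar_prod_def cv_def cvec_def)
      also have "norm \<dots> \<le> (\<Sum>j\<in>{0..<?n}. norm ((?A ^\<^sub>m k) $$ (l,j)) * abs (x $ h j))"
        by (rule order_trans[OF norm_sum]) (simp add: norm_mult)
      also have "\<dots> \<le> (\<Sum>j\<in>{0..<?n}. abs c0 * norm x)"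
      proof (rule sum_mono)
        fix j assume j: "j \<in> {0..<?n}"
        have "norm ((?A ^\<^sub>m k) $$ (l,j)) \<le> c0" using c0 l j Ak unfolding norm_bound_def by auto
        hence "norm ((?A ^\<^sub>m k) $$ (l,j)) \<le> abs c0" by linarith
        thus "norm ((?A ^\<^sub>m k) $$ (l,j)) * abs (x $ h j) \<le> abs c0 * norm x"
          by (intro mult_mono component_le_norm_cart) auto
      qed
      also have "\<dots> = real ?n * (abs c0 * norm x)" by simp
      finally show ?thesis .
    qed
    have "norm y \<le> (\<Sum>i\<in>UNIV. abs (y $ i))" by (rule norm_le_l1_cart)
    also have "\<dots> = (\<Sum>l\<in>{0..<?n}. abs (y $ h l))"
      using sum.reindex_bij_betw[OF h, of "\<lambda>i. abs (y $ i)"] by simp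
    also have "\<dots> = (\<Sum>l\<in>{0..<?n}. s^k * norm (vec_index (?A ^\<^sub>m k *\<^sub>v cv h (cvec x)) l))"
    proof (rule sum.cong[OF refl])
      fix l assume l: "l \<in> {0..<?n}"
      have "complex_of_real (y $ h l) = vec_index (cv h (cvec y)) l" using l by (simp add: cv_def cvec_def)
      also have "\<dots> = (complex_of_real s)^k * vec_index (?A ^\<^sub>m k *\<^sub>v cv h (cvec x)) l"
        using l Ak unfolding cv_eq by simp
      finally have "norm (complex_of_real (y $ h l)) = norm ((complex_of_real s)^k * vec_index (?A ^\<^sub>m k *\<^sub>v cv h (cvec x)) l)"
        by simp
      thus "abs (y $ h l) = s^k * norm (vec_index (?A ^\<^sub>m k *\<^sub>v cv h (cvec x)) l)"
        using s by (simp add: norm_mult norm_power)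
    qed
    also have "\<dots> \<le> (\<Sum>l\<in>{0..<?n}. s^k * (real ?n * (abs c0 * norm x)))"
      by (rule sum_mono) (use comp s in \<open>auto intro!: mult_left_mono\<close>)
    also have "\<dots> = s^k * (real ?n * real ?n * abs c0) * norm x" by simp
    also have "\<dots> \<le> s^k * K * norm x"
      unfolding K_def using s by (intro mult_right_mono mult_left_mono) auto
    also have "\<dots> \<le> \<epsilon> * norm x"
    proof -
      have "s^k * K \<le> \<epsilon>" using k K by (simp add: pos_less_divide_eq less_imp_le)
      thus ?thesis by (intro mult_right_mono) auto
    qed
    finally show "norm (((*v) (matrix_inv R) ^^ k) x) \<le> \<epsilon> * norm x" unfolding y_def M_def .
  qed
qed

locale ifs_setup =
  fixes R :: "real^'d^'d" and BB :: "(real^'d) set" and p :: "real^'d \<Rightarrow> real"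
    and X :: "(real^'d) set" and \<mu> :: "(real^'d) measure"
  assumes expR: "expansive R"
    and finB: "finite BB"
    and ppos: "\<forall>b\<in>BB. 0 < p b"
    and psum: "(\<Sum>b\<in>BB. p b) = 1"
    and Xcpt: "compact X" and Xne: "X \<noteq> {}"
    and Xattr: "X = (\<Union>b\<in>BB. ifs_map R b ` X)"
    and mu_prob: "prob_space \<mu>" and mu_sets: "sets \<mu> = sets borel"
    and mu_inv: "\<forall>E \<in> sets borel. measure \<mu> E = (\<Sum>b\<in>BB. p b * measure \<mu> (ifs_map R b -` E))"
    and no_overlap: "\<forall>b\<in>BB. \<forall>b'\<in>BB. b \<noteq> b' \<longrightarrow>
                        measure \<mu> (ifs_map R b ` X \<inter> ifs_map R b' ` X) = 0"
begin

abbreviation "M \<equiv> matrix_inv R"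
abbreviation "L k \<equiv> ((*v) M ^^ k)"

lemma space_mu: "space \<mu> = UNIV"
  using sets_eq_imp_space_eq[OF mu_sets] by simp

lemma inv: "R ** M = Finite_Cartesian_Product.mat 1" "M ** R = Finite_Cartesian_Product.mat 1"
  using inv_facts[OF expR] by auto

lemma tau_eq: "ifs_map R b x = M *v x + M *v b"
  by (simp add: ifs_map_def matrix_vector_right_distrib)

lemma tau_cont: "continuous_on A (ifs_map R b)"
  unfolding tau_eq by (intro continuous_on_add matrix_vector_mult_linear_continuous_on continuous_on_const)

lemma tau_meas[measurable]: "ifs_map R b \<in> borel_measurable borel"
  by (rule borel_measurable_continuous_onI[OF tau_cont])

lemma pre_borel: "E \<in> sets borel \<Longrightarrow> ifs_map R b -` E \<in> sets borel"
  by (rule measurable_sets_borel[OF tau_meas])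

lemma tau_inj: "inj (ifs_map R b)"
proof (rule injI)
  fix x y assume "ifs_map R b x = ifs_map R b y"
  hence "R *v (M *v (x + b)) = R *v (M *v (y + b))" by (simp add: ifs_map_def)
  hence "x + b = y + b" by (simp add: matrix_vector_mul_assoc inv)
  thus "x = y" by simp
qed

lemma tauX: "b \<in> BB \<Longrightarrow> ifs_map R b ` X \<subseteq> X"
  using Xattr by blast

lemma S_compact: "compact (ifs_map R b ` X)"
  by (rule compact_continuous_image[OF tau_cont Xcpt])

lemma S_borel: "ifs_map R b ` X \<in> sets borel"
  using S_compact by (simp add: compact_imp_closed borel_closed)

lemma X_borel: "X \<in> sets borel"
  using Xcpt by (simp add: compact_imp_closed borel_closed)

lemma L_diff: "L k (x - y) = L k x - L k y"
  by (induction k) (simp_all add: matrix_vector_mult_diff_distrib)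

lemma L_add: "L k (x + y) = L k x + L k y"
  by (induction k) (simp_all add: matrix_vector_right_distrib)

lemma Bne: "BB \<noteq> {}"
  using psum by auto

lemma meas_nonneg: "0 \<le> measure \<mu> A" by simp

lemma step_a:
  assumes E: "E \<in> sets borel"
  shows "\<exists>b\<in>BB. measure \<mu> E \<le> measure \<mu> (ifs_map R b -` E)"
proof (rule ccontr)
  assume "\<not> ?thesis"
  hence lt: "\<forall>b\<in>BB. measure \<mu> (ifs_map R b -` E) < measure \<mu> E" by auto
  have "(\<Sum>b\<in>BB. p b * measure \<mu> (ifs_map R b -` E)) < (\<Sum>b\<in>BB. p b * measure \<mu> E)"
    by (rule sum_strict_mono[OF finB Bne]) (use lt ppos in \<open>auto intro: mult_strict_left_mono\<close>)
  also have "\<dots> = measure \<mu> E" using psum by (simp add: sum_distrib_right[symmetric])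
  finally show False using mu_inv E by simp
qed

lemma step_b:
  assumes E: "E \<in> sets borel"
  shows "\<exists>f c. (\<forall>x. f x = L k x + c) \<and> f ` X \<subseteq> X \<and> measure \<mu> E \<le> measure \<mu> (f -` E)"
  using E
proof (induction k arbitrary: E)
  case 0
  show ?case by (rule exI[of _ id], rule exI[of _ 0]) auto
next
  case (Suc k)
  obtain b where b: "b \<in> BB" "measure \<mu> E \<le> measure \<mu> (ifs_map R b -` E)"
    using step_a[OF Suc.prems] by blast
  obtain f c where f: "\<forall>x. f x = L k x + c" "f ` X \<subseteq> X"
    "measure \<mu> (ifs_map R b -` E) \<le> measure \<mu> (f -` (ifs_map R b -` E))"
    using Suc.IH[OF pre_borel[OF Suc.prems]] by blast
  show ?case
  proof (intro exI conjI allI)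
    fix x
    show "(ifs_map R b \<circ> f) x = L (Suc k) x + (M *v c + M *v b)"
      using f(1) by (simp add: tau_eq matrix_vector_right_distrib)
  next
    show "(ifs_map R b \<circ> f) ` X \<subseteq> X" using f(2) tauX[OF b(1)] by (auto simp: image_comp[symmetric])
  next
    show "measure \<mu> E \<le> measure \<mu> ((ifs_map R b \<circ> f) -` E)"
      using b(2) f(3) by (simp add: vimage_comp)
  qed
qed

lemma D_null:
  assumes eps: "0 < \<epsilon>"
  shows "measure \<mu> {x. \<epsilon> \<le> infdist x X} = 0"
proof (rule ccontr)
  define D where "D = {x. \<epsilon> \<le> infdist x X}"
  assume "measure \<mu> {x. \<epsilon> \<le> infdist x X} \<noteq> 0"
  hence dpos: "0 < measure \<mu> D" using measure_nonneg[of \<mu> D] unfolding D_def by linarith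
  have infm: "(\<lambda>x. infdist x X) \<in> borel_measurable borel"
    by (intro borel_measurable_continuous_onI continuous_on_infdist continuous_on_id)
  have Dm: "D \<in> sets borel" unfolding D_def using infm by measurable
  obtain y0 where y0: "y0 \<in> X" using Xne by blast
  define G where "G m = {x. real m \<le> norm (x - y0)}" for m :: nat
  have Gm: "G m \<in> sets borel" for m unfolding G_def by measurable
  have dec: "antimono_on UNIV G" by (auto simp: monotone_on_def G_def)
  have inter: "(\<Inter> (range G)) = {}"
  proof -
    have "x \<notin> \<Inter> (range G)" for x
    proof -
      obtain m :: nat where "norm (x - y0) < real m" using reals_Archimedean2 by blast
      thus ?thesis by (auto simp: G_def not_le)
    qed
    thus ?thesis by blast
  qed
  interpret prob_space \<mu> by (rule mu_prob)
  have "(\<lambda>m. measure \<mu> (G m)) \<longlonglongrightarrow> measure \<mu> (\<Inter> (range G))"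
    by (rule finite_Lim_measure_decseq) (use Gm dec mu_sets in auto)
  hence "(\<lambda>m. measure \<mu> (G m)) \<longlonglongrightarrow> 0" using inter by simp
  then obtain m where m: "measure \<mu> (G m) < measure \<mu> D"
    using dpos by (metis (no_types, lifting) LIMSEQ_le_const linorder_not_le order_refl)
  obtain k where k: "\<forall>x. norm (L k x) \<le> \<epsilon> / (real m + 1) * norm x"
    using contraction[OF expR, of "\<epsilon> / (real m + 1)"] eps by auto
  obtain f c where f: "\<forall>x. f x = L k x + c" "f ` X \<subseteq> X" "measure \<mu> D \<le> measure \<mu> (f -` D)"
    using step_b[OF Dm] by blast
  have sub: "f -` D \<subseteq> G m"
  proof
    fix x assume "x \<in> f -` D"
    hence "\<epsilon> \<le> infdist (f x) X" by (simp add: D_def)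
    also have "\<dots> \<le> dist (f x) (f y0)" using f(2) y0 by (intro infdist_le) auto
    also have "\<dots> = norm (L k (x - y0))" using f(1) by (simp add: dist_norm L_diff)
    also have "\<dots> \<le> \<epsilon> / (real m + 1) * norm (x - y0)" using k by blast
    finally have "\<epsilon> \<le> \<epsilon> / (real m + 1) * norm (x - y0)" .
    hence "\<epsilon> * (real m + 1) \<le> \<epsilon> * norm (x - y0)"
      by (simp add: field_simps)
    hence "real m + 1 \<le> norm (x - y0)" using eps by simp
    thus "x \<in> G m" by (simp add: G_def)
  qed
  have "measure \<mu> (f -` D) \<le> measure \<mu> (G m)"
    by (rule finite_measure_mono[OF sub]) (use Gm mu_sets in auto)
  thus False using f(3) m by linarith
qed

lemma muX: "measure \<mu> X = 1"
proof -
  interpret prob_space \<mu> by (rule mu_prob)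
  define D where "D j = {x. 1 / real (Suc j) \<le> infdist x X}" for j
  have infm: "(\<lambda>x. infdist x X) \<in> borel_measurable borel"
    by (intro borel_measurable_continuous_onI continuous_on_infdist continuous_on_id)
  have Dn: "D j \<in> null_sets \<mu>" for j
  proof -
    have Dm: "D j \<in> sets \<mu>" unfolding D_def mu_sets using infm by measurable
    have "measure \<mu> (D j) = 0" unfolding D_def by (rule D_null) simp
    thus ?thesis using Dm by (simp add: null_setsI emeasure_eq_measure)
  qed
  have s1: "UNIV - X \<subseteq> (\<Union>j. D j)"
  proof
    fix x assume "x \<in> UNIV - X"
    hence pos: "0 < infdist x X"
      using infdist_pos_not_in_closed[of X x] Xcpt Xne compact_imp_closed by auto
    obtain j where "1 / real (Suc j) < infdist x X"
      using reals_Archimedean[OF pos] by (auto simp: inverse_eq_divide)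
    thus "x \<in> (\<Union>j. D j)" by (auto simp: D_def intro!: less_imp_le)
  qed
  have s2: "UNIV - X \<in> sets \<mu>" using X_borel mu_sets by auto
  have "UNIV - X \<in> null_sets \<mu>" by (rule null_sets_subset[OF null_sets_UN[OF Dn] s2 s1])
  hence "measure \<mu> (space \<mu> - X) = 0" using space_mu by (simp add: measure_eq_0_null_sets)
  moreover have "measure \<mu> (space \<mu> - X) = 1 - measure \<mu> X"
    by (rule prob_compl) (use X_borel mu_sets in auto)
  ultimately show ?thesis by simp
qed

lemma overlap_pre:
  assumes b: "b \<in> BB" and c: "c \<in> BB" and bc: "b \<noteq> c"
  shows "measure \<mu> (ifs_map R c -` (ifs_map R b ` X \<inter> ifs_map R c ` X)) = 0"
proof -
  let ?O = "ifs_map R b ` X \<inter> ifs_map R c ` X"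
  have Om: "?O \<in> sets borel" by (intro sets.Int S_borel)
  have e1: "measure \<mu> ?O = (\<Sum>c'\<in>BB. p c' * measure \<mu> (ifs_map R c' -` ?O))"
    using bspec[OF mu_inv Om] .
  have "measure \<mu> ?O = 0" using no_overlap[rule_format, OF b c bc] .
  hence "(\<Sum>c'\<in>BB. p c' * measure \<mu> (ifs_map R c' -` ?O)) = 0" using e1 by simp
  moreover have "\<forall>c'\<in>BB. 0 \<le> p c' * measure \<mu> (ifs_map R c' -` ?O)"
    using ppos by (simp add: less_imp_le)
  ultimately have "\<forall>c'\<in>BB. p c' * measure \<mu> (ifs_map R c' -` ?O) = 0"
    using sum_nonneg_eq_0_iff[OF finB, of "\<lambda>c'. p c' * measure \<mu> (ifs_map R c' -` ?O)"] by simp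
  hence pc: "p c * measure \<mu> (ifs_map R c -` ?O) = 0" using c by blast
  have "p c \<noteq> 0" using ppos c by auto
  with pc show ?thesis by (simp only: mult_eq_0_iff) simp
qed

lemma ae_X:
  assumes A: "A \<in> sets borel"
  shows "measure \<mu> (A \<inter> X) = measure \<mu> A"
proof -
  interpret prob_space \<mu> by (rule mu_prob)
  have c0: "measure \<mu> (UNIV - X) = 0"
    using prob_compl[of X] X_borel mu_sets muX space_mu by simp
  have "measure \<mu> (A - (A \<inter> X)) = measure \<mu> A - measure \<mu> (A \<inter> X)"
    by (rule finite_measure_Diff) (use A X_borel mu_sets in auto)
  moreover have "measure \<mu> (A - (A \<inter> X)) \<le> measure \<mu> (UNIV - X)"
    by (rule finite_measure_mono) (use X_borel mu_sets in auto)
  moreover have "measure \<mu> (A \<inter> X) \<le> measure \<mu> A"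
    by (rule finite_measure_mono) (use A mu_sets in auto)
  ultimately show ?thesis using c0 measure_nonneg[of \<mu> "A - (A \<inter> X)"] by linarith
qed


lemma one_step:
  assumes b: "b \<in> BB" and E: "E \<in> sets borel"
  shows "measure \<mu> (E \<inter> ifs_map R b ` X) = p b * measure \<mu> (ifs_map R b -` E)"
proof -
  interpret prob_space \<mu> by (rule mu_prob)
  have EI: "E \<inter> ifs_map R b ` X \<in> sets borel" by (intro sets.Int E S_borel)
  have "measure \<mu> (E \<inter> ifs_map R b ` X) =
        (\<Sum>c\<in>BB. p c * measure \<mu> (ifs_map R c -` (E \<inter> ifs_map R b ` X)))"
    using bspec[OF mu_inv EI] .
  also have "\<dots> = (\<Sum>c\<in>BB. if c = b then p b * measure \<mu> (ifs_map R b -` E) else 0)"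
  proof (rule sum.cong[OF refl])
    fix c assume c: "c \<in> BB"
    have pm: "ifs_map R c -` (E \<inter> ifs_map R b ` X) \<in> sets borel" by (rule pre_borel[OF EI])
    have Ob: "ifs_map R b ` X \<inter> ifs_map R c ` X \<in> sets borel" by (intro sets.Int S_borel)
    show "p c * measure \<mu> (ifs_map R c -` (E \<inter> ifs_map R b ` X)) =
          (if c = b then p b * measure \<mu> (ifs_map R b -` E) else 0)"
    proof (cases "c = b")
      case True
      have "ifs_map R b -` (E \<inter> ifs_map R b ` X) = ifs_map R b -` E \<inter> X"
        by (simp add: vimage_Int inj_vimage_image_eq[OF tau_inj])
      thus ?thesis using True ae_X[OF pre_borel[OF E]] by simp
    next
      case False
      have "measure \<mu> (ifs_map R c -` (E \<inter> ifs_map R b ` X)) =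
            measure \<mu> (ifs_map R c -` (E \<inter> ifs_map R b ` X) \<inter> X)"
        using ae_X[OF pm] by simp
      also have "\<dots> \<le> measure \<mu> (ifs_map R c -` (ifs_map R b ` X \<inter> ifs_map R c ` X))"
      proof (rule finite_measure_mono)
        show "ifs_map R c -` (ifs_map R b ` X \<inter> ifs_map R c ` X) \<in> sets \<mu>"
          using pre_borel[OF Ob] mu_sets by simp
      qed blast
      also have "\<dots> = 0" using overlap_pre[OF b c] False by simp
      finally have "measure \<mu> (ifs_map R c -` (E \<inter> ifs_map R b ` X)) = 0"
        using measure_nonneg[of \<mu> "ifs_map R c -` (E \<inter> ifs_map R b ` X)"] by linarith
      thus ?thesis using False by simp
    qed
  qed
  also have "\<dots> = p b * measure \<mu> (ifs_map R b -` E)" using b finB by (simp add: sum.delta)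
  finally show ?thesis .
qed

abbreviation "T b k \<equiv> ifs_map R b ^^ k"

lemma T_form: "\<exists>c. \<forall>x. T b k x = L k x + c"
proof (induction k)
  case 0 show ?case by (rule exI[of _ 0]) simp
next
  case (Suc k)
  then obtain c where c: "\<forall>x. T b k x = L k x + c" by blast
  have "T b (Suc k) x = L (Suc k) x + (M *v c + M *v b)" for x
  proof -
    have "T b (Suc k) x = M *v T b k x + M *v b" using tau_eq[of b "T b k x"] by simp
    thus ?thesis using c by (simp add: matrix_vector_right_distrib)
  qed
  thus ?case by blast
qed

lemma T_cont: "continuous_on A (T b k)"
proof (induction k)
  case 0 show ?case by (simp add: continuous_on_id)
next
  case (Suc k)
  have "continuous_on A (ifs_map R b \<circ> T b k)"
    by (rule continuous_on_compose[OF Suc tau_cont])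
  thus ?case by simp
qed

lemma L_cont: "continuous_on A (L k)"
proof (induction k)
  case 0 show ?case by (simp add: continuous_on_id)
next
  case (Suc k)
  have "continuous_on A ((*v) M \<circ> L k)"
    by (rule continuous_on_compose[OF Suc matrix_vector_mult_linear_continuous_on])
  thus ?case by simp
qed

lemma T_X: "b \<in> BB \<Longrightarrow> T b k ` X \<subseteq> X"
proof (induction k)
  case 0 show ?case by simp
next
  case (Suc k)
  have "T b (Suc k) ` X = ifs_map R b ` (T b k ` X)" by (simp add: image_comp)
  also have "\<dots> \<subseteq> ifs_map R b ` X" using Suc by (intro image_mono) auto
  also have "\<dots> \<subseteq> X" using tauX[OF Suc.prems] .
  finally show ?case .
qed

lemma T_compact: "compact (T b k ` X)"
  by (rule compact_continuous_image[OF T_cont Xcpt])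

lemma T_borel: "T b k ` X \<in> sets borel"
  using T_compact by (simp add: compact_imp_closed borel_closed)

lemma T_meas: "T b k \<in> borel_measurable borel"
  by (rule borel_measurable_continuous_onI[OF T_cont])

lemma iter:
  assumes b: "b \<in> BB"
  shows "E \<in> sets borel \<Longrightarrow> measure \<mu> (E \<inter> T b k ` X) = p b ^ k * measure \<mu> (T b k -` E)"
proof (induction k arbitrary: E)
  case 0
  then show ?case using ae_X[OF 0] by simp
next
  case (Suc k)
  let ?Y = "T b k ` X"
  have img: "T b (Suc k) ` X = ifs_map R b ` ?Y" by (simp add: image_comp)
  have cY: "compact (ifs_map R b ` ?Y)" by (rule compact_continuous_image[OF tau_cont T_compact])
  have E': "E \<inter> ifs_map R b ` ?Y \<in> sets borel"
    by (intro sets.Int Suc.prems) (use cY in \<open>simp add: compact_imp_closed borel_closed\<close>)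
  have sub: "ifs_map R b ` ?Y \<subseteq> ifs_map R b ` X" using T_X[OF b] by (intro image_mono)
  have "E \<inter> T b (Suc k) ` X = (E \<inter> ifs_map R b ` ?Y) \<inter> ifs_map R b ` X"
    unfolding img using sub by blast
  hence "measure \<mu> (E \<inter> T b (Suc k) ` X) = p b * measure \<mu> (ifs_map R b -` (E \<inter> ifs_map R b ` ?Y))"
    using one_step[OF b E'] by simp
  also have "ifs_map R b -` (E \<inter> ifs_map R b ` ?Y) = ifs_map R b -` E \<inter> ?Y"
    by (simp add: vimage_Int inj_vimage_image_eq[OF tau_inj])
  also have "measure \<mu> (ifs_map R b -` E \<inter> ?Y) = p b ^ k * measure \<mu> (T b k -` (ifs_map R b -` E))"
    by (rule Suc.IH[OF pre_borel[OF Suc.prems]])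
  also have "T b k -` (ifs_map R b -` E) = T b (Suc k) -` E"
    by (simp add: vimage_comp)
  finally show ?case by (simp add: o_def)
qed

definition Phi :: "nat \<Rightarrow> real^'d \<Rightarrow> complex" where
  "Phi k t = (\<integral>y. cis (- 2 * pi * (t \<bullet> L k y)) \<partial>\<mu>)"

lemma Phi_meas: "Phi k \<in> borel_measurable borel"
proof -
  interpret prob_space \<mu> by (rule mu_prob)
  have Lm: "L k \<in> borel_measurable \<mu>"
    using borel_measurable_continuous_onI[OF L_cont] measurable_cong_sets[OF mu_sets refl] by blast
  have cm: "(\<lambda>y. cis (- (2 * pi * (t \<bullet> L k y)))) \<in> borel_measurable \<mu>" for t
  proof -
    have "continuous_on UNIV (\<lambda>y. cis (- (2 * pi * (t \<bullet> L k y))))"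
      by (intro continuous_intros L_cont)
    thus ?thesis using borel_measurable_continuous_onI measurable_cong_sets[OF mu_sets refl] by blast
  qed
  have "isCont (Phi k) t" for t
    unfolding continuous_at_sequentially
  proof safe
    fix Y assume Y: "Y \<longlonglongrightarrow> t"
    show "(Phi k \<circ> Y) \<longlonglongrightarrow> Phi k t"
      unfolding comp_def Phi_def
      by (rule integral_dominated_convergence[where w="\<lambda>_. 1"])
         (use Lm cm in \<open>auto intro!: tendsto_intros Y\<close>)
  qed
  thus ?thesis by (auto intro!: borel_measurable_continuous_onI continuous_at_imp_continuous_on)
qed

lemma T_meas_mu: "T b k \<in> \<mu> \<rightarrow>\<^sub>M borel"
  using T_meas measurable_cong_sets[OF mu_sets refl] by blast

lemma dens_eq:
  assumes b: "b \<in> BB"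
  shows "density \<mu> (\<lambda>x. ennreal (indicator (T b k ` X) x)) =
         density (distr \<mu> borel (T b k)) (\<lambda>_. ennreal (p b ^ k))"
proof (rule measure_eqI)
  interpret prob_space \<mu> by (rule mu_prob)
  show "sets (density \<mu> (\<lambda>x. ennreal (indicator (T b k ` X) x))) =
        sets (density (distr \<mu> borel (T b k)) (\<lambda>_. ennreal (p b ^ k)))"
    using mu_sets by simp
  fix A assume "A \<in> sets (density \<mu> (\<lambda>x. ennreal (indicator (T b k ` X) x)))"
  hence A: "A \<in> sets borel" using mu_sets by simp
  have "emeasure (density \<mu> (\<lambda>x. ennreal (indicator (T b k ` X) x))) A = emeasure \<mu> (T b k ` X \<inter> A)"
    unfolding ennreal_indicator by (rule emeasure_restricted) (use T_borel A mu_sets in auto)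
  also have "\<dots> = ennreal (measure \<mu> (A \<inter> T b k ` X))" by (simp add: emeasure_eq_measure Int_commute)
  also have "\<dots> = ennreal (p b ^ k * measure \<mu> (T b k -` A))" using iter[OF b A] by simp
  also have "\<dots> = ennreal (p b ^ k) * emeasure (distr \<mu> borel (T b k)) A"
  proof -
    have pb: "0 \<le> p b ^ k" using ppos b by (simp add: less_imp_le)
    show ?thesis
      by (simp add: emeasure_distr[OF T_meas_mu A] space_mu emeasure_eq_measure ennreal_mult[OF pb measure_nonneg])
  qed
  also have "\<dots> = emeasure (density (distr \<mu> borel (T b k)) (\<lambda>_. ennreal (p b ^ k))) A"
    by (rule emeasure_density_const[symmetric]) (use A in simp)
  finally show "emeasure (density \<mu> (\<lambda>x. ennreal (indicator (T b k ` X) x))) A =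
      emeasure (density (distr \<mu> borel (T b k)) (\<lambda>_. ennreal (p b ^ k))) A" .
qed

lemma int_eq:
  fixes \<phi> :: "real^'d \<Rightarrow> complex"
  assumes b: "b \<in> BB" and phi: "\<phi> \<in> borel_measurable borel"
  shows "(\<integral>x. indicator (T b k ` X) x *\<^sub>R \<phi> x \<partial>\<mu>) = p b ^ k *\<^sub>R (\<integral>y. \<phi> (T b k y) \<partial>\<mu>)"
proof -
  have phim: "\<phi> \<in> borel_measurable \<mu>" using phi measurable_cong_sets[OF mu_sets refl] by blast
  have im: "indicator (T b k ` X) \<in> borel_measurable \<mu>"
    using T_borel mu_sets by (intro borel_measurable_indicator) simp
  have "(\<integral>x. indicator (T b k ` X) x *\<^sub>R \<phi> x \<partial>\<mu>) =
        integral\<^sup>L (density \<mu> (\<lambda>x. ennreal (indicator (T b k ` X) x))) \<phi>"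
    by (rule integral_density[symmetric]) (use phim im in auto)
  also have "\<dots> = integral\<^sup>L (density (distr \<mu> borel (T b k)) (\<lambda>_. ennreal (p b ^ k))) \<phi>"
    by (simp only: dens_eq[OF b])
  also have "\<dots> = (\<integral>x. p b ^ k *\<^sub>R \<phi> x \<partial>distr \<mu> borel (T b k))"
    by (rule integral_density) (use phi ppos b in auto)
  also have "\<dots> = (\<integral>y. p b ^ k *\<^sub>R \<phi> (T b k y) \<partial>\<mu>)"
    by (rule integral_distr[OF T_meas_mu]) (use phi in simp)
  also have "\<dots> = p b ^ k *\<^sub>R (\<integral>y. \<phi> (T b k y) \<partial>\<mu>)" by simp
  finally show ?thesis .
qed

lemma fourier_ind:
  assumes b: "b \<in> BB"
  shows "norm (fourier_fmu \<mu> (indicator (T b k ` X)) t) = p b ^ k * norm (Phi k t)"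
proof -
  obtain c where c: "\<forall>x. T b k x = L k x + c" using T_form by blast
  have phi: "(\<lambda>x. cis (- 2 * pi * (t \<bullet> x))) \<in> borel_measurable borel"
    by (intro borel_measurable_continuous_onI continuous_intros)
  have "fourier_fmu \<mu> (indicator (T b k ` X)) t = (\<integral>x. indicator (T b k ` X) x *\<^sub>R cis (- 2 * pi * (t \<bullet> x)) \<partial>\<mu>)"
    unfolding fourier_fmu_def by (rule Bochner_Integration.integral_cong) (auto simp: indicator_def)
  also have "\<dots> = p b ^ k *\<^sub>R (\<integral>y. cis (- 2 * pi * (t \<bullet> T b k y)) \<partial>\<mu>)"
    by (rule int_eq[OF b phi])
  also have "(\<integral>y. cis (- 2 * pi * (t \<bullet> T b k y)) \<partial>\<mu>) = (\<integral>y. cis (- 2 * pi * (t \<bullet> L k y)) * cis (- 2 * pi * (t \<bullet> c)) \<partial>\<mu>)"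
    by (rule Bochner_Integration.integral_cong) (auto simp: c inner_add_right cis_mult algebra_simps)
  also have "\<dots> = Phi k t * cis (- 2 * pi * (t \<bullet> c))"
    unfolding Phi_def by (rule integral_mult_left_zero)
  moreover have "0 < p b" using ppos b by blast
  ultimately show ?thesis by (simp add: norm_mult)
qed

lemma ind_L2: "(indicator (T b k ` X) :: real^'d \<Rightarrow> complex) \<in> L2 \<mu>"
proof -
  interpret prob_space \<mu> by (rule mu_prob)
  have Sm: "T b k ` X \<in> sets \<mu>" using T_borel mu_sets by simp
  have "(\<lambda>x. (norm (indicator (T b k ` X) x :: complex))\<^sup>2) = indicator (T b k ` X)"
    by (auto simp: indicator_def)
  moreover have "integrable \<mu> (indicator (T b k ` X) :: real^'d \<Rightarrow> real)"
    using Sm by (simp add: integrable_indicator_iff emeasure_eq_measure)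
  moreover have "(indicator (T b k ` X) :: real^'d \<Rightarrow> complex) \<in> borel_measurable \<mu>"
    using Sm by (intro borel_measurable_indicator)
  ultimately show ?thesis unfolding L2_def by simp
qed

lemma ind_norm:
  assumes b: "b \<in> BB"
  shows "L2_norm_sq \<mu> (indicator (T b k ` X) :: real^'d \<Rightarrow> complex) = p b ^ k"
proof -
  interpret prob_space \<mu> by (rule mu_prob)
  have Sm: "T b k ` X \<in> sets \<mu>" using T_borel mu_sets by simp
  have "(\<lambda>x. (norm (indicator (T b k ` X) x :: complex))\<^sup>2) = indicator (T b k ` X)"
    by (auto simp: indicator_def)
  hence "L2_norm_sq \<mu> (indicator (T b k ` X) :: real^'d \<Rightarrow> complex) = measure \<mu> (T b k ` X)"
    unfolding L2_norm_sq_def using Sm by simp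
  also have "\<dots> = measure \<mu> (UNIV \<inter> T b k ` X)" by simp
  also have "\<dots> = p b ^ k * measure \<mu> (T b k -` UNIV)" by (rule iter[OF b]) simp
  also have "\<dots> = p b ^ k" using prob_space space_mu by simp
  finally show ?thesis .
qed

definition II :: "(real^'d) measure \<Rightarrow> nat \<Rightarrow> ennreal" where
  "II \<nu> k = (\<integral>\<^sup>+ t. ennreal ((norm (Phi k t))\<^sup>2) \<partial>\<nu>)"

lemma frame_k:
  assumes b: "b \<in> BB" and nus: "sets \<nu> = sets borel"
    and fr: "\<forall>f \<in> L2 \<mu>.
          ennreal (A * L2_norm_sq \<mu> f) \<le> (\<integral>\<^sup>+ t. ennreal ((norm (fourier_fmu \<mu> f t))\<^sup>2) \<partial>\<nu>) \<and>
          (\<integral>\<^sup>+ t. ennreal ((norm (fourier_fmu \<mu> f t))\<^sup>2) \<partial>\<nu>) \<le> ennreal (B * L2_norm_sq \<mu> f)"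
  shows "ennreal (A * p b ^ k) \<le> ennreal (p b ^ k * p b ^ k) * II \<nu> k \<and>
         ennreal (p b ^ k * p b ^ k) * II \<nu> k \<le> ennreal (B * p b ^ k)"
proof -
  have pb: "0 \<le> p b ^ k" using ppos b by (simp add: less_imp_le)
  have [measurable]: "Phi k \<in> borel_measurable \<nu>"
    using Phi_meas measurable_cong_sets[OF nus refl] by blast
  have Pm: "(\<lambda>t. ennreal ((norm (Phi k t))\<^sup>2)) \<in> borel_measurable \<nu>"
    by measurable
  have "(\<integral>\<^sup>+ t. ennreal ((norm (fourier_fmu \<mu> (indicator (T b k ` X)) t))\<^sup>2) \<partial>\<nu>) =
        (\<integral>\<^sup>+ t. ennreal (p b ^ k * p b ^ k) * ennreal ((norm (Phi k t))\<^sup>2) \<partial>\<nu>)"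
    by (rule nn_integral_cong) (simp add: fourier_ind[OF b] ennreal_mult[symmetric] pb power2_eq_square algebra_simps)
  also have "\<dots> = ennreal (p b ^ k * p b ^ k) * II \<nu> k"
    unfolding II_def by (rule nn_integral_cmult[OF Pm])
  finally have eq: "(\<integral>\<^sup>+ t. ennreal ((norm (fourier_fmu \<mu> (indicator (T b k ` X)) t))\<^sup>2) \<partial>\<nu>) =
        ennreal (p b ^ k * p b ^ k) * II \<nu> k" .
  have h: "ennreal (A * L2_norm_sq \<mu> (indicator (T b k ` X))) \<le> (\<integral>\<^sup>+ t. ennreal ((norm (fourier_fmu \<mu> (indicator (T b k ` X)) t))\<^sup>2) \<partial>\<nu>) \<and>
          (\<integral>\<^sup>+ t. ennreal ((norm (fourier_fmu \<mu> (indicator (T b k ` X)) t))\<^sup>2) \<partial>\<nu>) \<le> ennreal (B * L2_norm_sq \<mu> (indicator (T b k ` X)))"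
    by (rule bspec[OF fr ind_L2[where b=b and k=k]])
  show ?thesis using h unfolding ind_norm[OF b] eq .
qed

end

lemma enn_get:
  fixes q A B :: real and I :: ennreal
  assumes q: "0 < q" and A: "0 < A" and B: "0 < B"
    and l: "ennreal (A*q) \<le> ennreal (q*q) * I" and u: "ennreal (q*q) * I \<le> ennreal (B*q)"
  shows "A \<le> q * enn2real I \<and> q * enn2real I \<le> B"
proof -
  have "I \<noteq> \<top>"
  proof
    assume "I = \<top>"
    hence "ennreal (q*q) * I = \<top>" using q by (simp add: ennreal_mult_eq_top_iff)
    thus False using u by (metis ennreal_neq_top top_unique)
  qed
  then obtain r where r: "I = ennreal r" "0 \<le> r" by (cases I) auto
  have e: "ennreal (q*q) * I = ennreal (q*q*r)" using r q by (simp add: ennreal_mult)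
  have "A*q \<le> q*q*r" using l r q unfolding e by (simp add: ennreal_le_iff)
  hence "A \<le> q * r" using q by (simp add: mult.assoc mult_le_cancel_left_pos mult.commute[of A])
  moreover have "q*q*r \<le> B*q" using u B q unfolding e by (simp add: ennreal_le_iff)
  hence "q * r \<le> B" using q by (simp add: mult.assoc mult_le_cancel_left_pos mult.commute[of B])
  ultimately show ?thesis using r by simp
qed

lemma ratio:
  fixes q q' A B :: real
  assumes A: "0 < A" and q: "0 < q" and q': "0 < q'"
    and h: "\<And>k. \<exists>r. A \<le> q^k * r \<and> q^k * r \<le> B \<and> A \<le> q'^k * r \<and> q'^k * r \<le> B"
  shows "q \<le> q'"
proof (rule ccontr)
  assume "\<not> q \<le> q'"
  hence gt: "1 < q / q'" using q' by simp
  obtain k where k: "B / A < (q / q') ^ k" using real_arch_pow[OF gt] by blast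
  obtain r where r: "A \<le> q^k * r" "q^k * r \<le> B" "A \<le> q'^k * r" "q'^k * r \<le> B" using h by blast
  have e: "(q / q') ^ k * (q'^k * r) = q^k * r" using q' by (simp add: power_divide)
  have nn: "0 \<le> (q / q') ^ k" using q q' by simp
  have "(q / q') ^ k * A \<le> (q / q') ^ k * (q'^k * r)" by (rule mult_left_mono[OF r(3) nn])
  hence "(q / q') ^ k * A \<le> q^k * r" using e by simp
  also have "\<dots> \<le> B" by (rule r(2))
  finally have "(q/q')^k \<le> B / A" using A by (simp add: pos_le_divide_eq)
  thus False using k by simp
qed


theorem theorem3p4:
  fixes R :: "real^'d^'d" and \<B> :: "(real^'d) set" and p :: "real^'d \<Rightarrow> real"
    and X :: "(real^'d) set" and \<mu> :: "(real^'d) measure"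
  assumes expR: "expansive R"
    and finB: "finite \<B>"
    and ppos: "\<forall>b\<in>\<B>. 0 < p b"
    and psum: "(\<Sum>b\<in>\<B>. p b) = 1"
    and Xcpt: "compact X" and Xne: "X \<noteq> {}"
    and Xattr: "X = (\<Union>b\<in>\<B>. ifs_map R b ` X)"
    and mu_prob: "prob_space \<mu>" and mu_sets: "sets \<mu> = sets borel"
    and mu_inv: "\<forall>E \<in> sets borel. measure \<mu> E = (\<Sum>b\<in>\<B>. p b * measure \<mu> (ifs_map R b -` E))"
    and no_overlap: "\<forall>b\<in>\<B>. \<forall>b'\<in>\<B>. b \<noteq> b' \<longrightarrow>
                        measure \<mu> (ifs_map R b ` X \<inter> ifs_map R b' ` X) = 0"
    and frame: "\<exists>\<nu>. frame_measure \<mu> \<nu>"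
  shows "\<forall>b\<in>\<B>. \<forall>b'\<in>\<B>. p b = p b'"
proof -
  have loc: "ifs_setup R \<B> p X \<mu>"
    unfolding ifs_setup_def using expR finB ppos psum Xcpt Xne Xattr mu_prob mu_sets mu_inv no_overlap
    by blast
  interpret I: ifs_setup R \<B> p X \<mu> by (rule loc)
  obtain \<nu> where fm: "frame_measure \<mu> \<nu>" using frame by blast
  obtain A Bd where nus: "sets \<nu> = sets borel" and A: "0 < A" and Bd: "0 < Bd"
    and fr: "\<forall>f \<in> L2 \<mu>.
          ennreal (A * L2_norm_sq \<mu> f) \<le> (\<integral>\<^sup>+ t. ennreal ((norm (fourier_fmu \<mu> f t))\<^sup>2) \<partial>\<nu>) \<and>
          (\<integral>\<^sup>+ t. ennreal ((norm (fourier_fmu \<mu> f t))\<^sup>2) \<partial>\<nu>) \<le> ennreal (Bd * L2_norm_sq \<mu> f)"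
    using fm unfolding frame_measure_def by blast
  have bnd: "A \<le> p b ^ k * enn2real (I.II \<nu> k) \<and> p b ^ k * enn2real (I.II \<nu> k) \<le> Bd"
    if b: "b \<in> \<B>" for b k
  proof -
    have pb: "0 < p b ^ k" using ppos b by simp
    have h: "ennreal (A * p b ^ k) \<le> ennreal (p b ^ k * p b ^ k) * I.II \<nu> k \<and>
         ennreal (p b ^ k * p b ^ k) * I.II \<nu> k \<le> ennreal (Bd * p b ^ k)"
      by (rule I.frame_k[OF b nus fr])
    show ?thesis using enn_get[OF pb A Bd] h by blast
  qed
  have le: "p b \<le> p b'" if b: "b \<in> \<B>" and b': "b' \<in> \<B>" for b b'
  proof (rule ratio[OF A])
    show "0 < p b" using ppos b by blast
    show "0 < p b'" using ppos b' by blast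
    fix k
    show "\<exists>r. A \<le> p b ^ k * r \<and> p b ^ k * r \<le> Bd \<and> A \<le> p b' ^ k * r \<and> p b' ^ k * r \<le> Bd"
      using bnd[OF b, of k] bnd[OF b', of k] by blast
  qed
  show ?thesis using le by (meson antisym)
qed

end
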